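(* In the allocation problem described in the context, let $\eta_1,\ldots,\eta_n$ be speed functions and let $a^\pi$ be the allocation produced by the extended SG mechanism with these speeds when every agent $i$ bids its true list $\pi_i$. Then $a^\pi$ is Pareto optimal: there is no allocation $a$ such that every agent $i$ weakly prefers $a_{i*}$ to $a^\pi_{i*}$ (i.e., $a_{i*}=a^\pi_{i*}$ or $a_{i*}>_i a^\pi_{i*}$) and some agent $i$ has $a_{i*}>_i a^\pi_{i*}$.
   Context: There are $m$ distinct divisible goods; good $j$ is available in amount $q_j>0$. There are $n$ agents; agent $i$ is to receive a total of $r_i>0$, with $\sum_j q_j=\sum_i r_i$. An allocation is a family $a_{ij}\ge 0$ with $\sum_j a_{ij}=r_i$ and $\sum_i a_{ij}=q_j$; $a_{i*}=(a_{i1},\ldots,a_{im})$ is agent $i$'s share. Each agent $i$ has a true preference list $\pi_i$, a permutation of the goods ($\pi_i(1)$ most preferred). Agent $i$ prefers $a_{i*}$ to $b_{i*}$, written $a_{i*}>_i b_{i*}$, if the leftmost nonzero coordinate of $(a_{i\pi_i(\ell)}-b_{i\pi_i(\ell)})_{\ell=1}^m$ is positive. A speed function for agent $i$ is a nonnegative integrable function $\eta_i:[0,1]\to\mathbb{R}_{\ge 0}$ with $\int_0^1\eta_i(t)\,dt=r_i$. The extended SG mechanism with speeds $\eta_1,\ldots,\eta_n$: each agent $i$ bids a permutation $\sigma_i$ of the goods; over time $t\in[0,1]$, each agent $i$ receives, at rate $\eta_i(t)$, the good highest in $\sigma_i$ among those not yet exhausted (a good is exhausted when the total amount handed out equals $q_j$;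 several agents may receive a good simultaneously; upon exhaustion, agents receiving it switch to their next non-exhausted good). The resulting allocation records the total amount of each good each agent receives. *)

theory Defs
  imports "HOL-Analysis.Analysis"
begin

text \<open>Agents are 0..n-1, goods are 0..m-1. A preference list / bid is a function
  p :: nat => nat with p l = the good ranked l (rank 0 = most preferred), a bijection
  of {..<m}.\<close>

definition is_allocation :: "nat \<Rightarrow> nat \<Rightarrow> (nat \<Rightarrow> real) \<Rightarrow> (nat \<Rightarrow> real)
    \<Rightarrow> (nat \<Rightarrow> nat \<Rightarrow> real) \<Rightarrow> bool" where
  "is_allocation n m q r a \<longleftrightarrow>
     (\<forall>i<n. \<forall>j<m. a i j \<ge> 0) \<and>
     (\<forall>i<n. (\<Sum>j<m. a i j) = r i) \<and>
     (\<forall>j<m. (\<Sum>i<n. a i j) = q j)"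

definition lex_prefers :: "nat \<Rightarrow> (nat \<Rightarrow> nat) \<Rightarrow> (nat \<Rightarrow> real) \<Rightarrow> (nat \<Rightarrow> real) \<Rightarrow> bool" where
  "lex_prefers m p u w \<longleftrightarrow>
     (\<exists>k<m. (\<forall>l<k. u (p l) = w (p l)) \<and> u (p k) > w (p k))"

definition weakly_prefers :: "nat \<Rightarrow> (nat \<Rightarrow> nat) \<Rightarrow> (nat \<Rightarrow> real) \<Rightarrow> (nat \<Rightarrow> real) \<Rightarrow> bool" where
  "weakly_prefers m p u w \<longleftrightarrow> (\<forall>j<m. u j = w j) \<or> lex_prefers m p u w"

definition pareto_optimal :: "nat \<Rightarrow> nat \<Rightarrow> (nat \<Rightarrow> real) \<Rightarrow> (nat \<Rightarrow> real)
    \<Rightarrow> (nat \<Rightarrow> nat \<Rightarrow> nat) \<Rightarrow> (nat \<Rightarrow> nat \<Rightarrow> real) \<Rightarrow> bool" where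
  "pareto_optimal n m q r pref b \<longleftrightarrow>
     \<not> (\<exists>a. is_allocation n m q r a \<and>
            (\<forall>i<n. weakly_prefers m (pref i) (a i) (b i)) \<and>
            (\<exists>i<n. lex_prefers m (pref i) (a i) (b i)))"

text \<open>Eating process. x i j t = cumulative amount of good j received by agent i up to time t.
  Good j is exhausted at time s if the total amount handed out has reached q j.\<close>
definition exhausted :: "nat \<Rightarrow> (nat \<Rightarrow> real) \<Rightarrow> (nat \<Rightarrow> nat \<Rightarrow> real \<Rightarrow> real) \<Rightarrow> nat \<Rightarrow> real \<Rightarrow> bool" where
  "exhausted n q x j s \<longleftrightarrow> (\<Sum>i<n. x i j s) \<ge> q j"

definition receiving :: "nat \<Rightarrow> nat \<Rightarrow> (nat \<Rightarrow> real) \<Rightarrow> (nat \<Rightarrow> nat \<Rightarrow> real \<Rightarrow> real)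
    \<Rightarrow> (nat \<Rightarrow> nat) \<Rightarrow> nat \<Rightarrow> real \<Rightarrow> bool" where
  "receiving n m q x p j s \<longleftrightarrow>
     (\<exists>l<m. p l = j \<and> \<not> exhausted n q x j s \<and> (\<forall>l'<l. exhausted n q x (p l') s))"

definition SG_trajectory :: "nat \<Rightarrow> nat \<Rightarrow> (nat \<Rightarrow> real) \<Rightarrow> (nat \<Rightarrow> real \<Rightarrow> real)
    \<Rightarrow> (nat \<Rightarrow> nat \<Rightarrow> nat) \<Rightarrow> (nat \<Rightarrow> nat \<Rightarrow> real \<Rightarrow> real) \<Rightarrow> bool" where
  "SG_trajectory n m q \<eta> \<sigma> x \<longleftrightarrow>
     (\<forall>i<n. \<forall>j<m. \<forall>t\<in>{0..1}.
        ((\<lambda>s. \<eta> i s * (if receiving n m q x (\<sigma> i) j s then 1 else 0)) has_integral x i j t) {0..t})"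

definition SG_outcome :: "nat \<Rightarrow> nat \<Rightarrow> (nat \<Rightarrow> real) \<Rightarrow> (nat \<Rightarrow> real \<Rightarrow> real)
    \<Rightarrow> (nat \<Rightarrow> nat \<Rightarrow> nat) \<Rightarrow> (nat \<Rightarrow> nat \<Rightarrow> real) \<Rightarrow> bool" where
  "SG_outcome n m q \<eta> \<sigma> a \<longleftrightarrow>
     (\<exists>x. SG_trajectory n m q \<eta> \<sigma> x \<and> (\<forall>i<n. \<forall>j<m. a i j = x i j 1))"

end

theory Submission
  imports Defs
begin

theorem theorem5:
  fixes n m :: nat and q r :: "nat \<Rightarrow> real" and \<eta> :: "nat \<Rightarrow> real \<Rightarrow> real"
    and \<pi> :: "nat \<Rightarrow> nat \<Rightarrow> nat" and aPi :: "nat \<Rightarrow> nat \<Rightarrow> real"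
  assumes q_pos: "\<forall>j<m. q j > 0"
    and r_pos: "\<forall>i<n. r i > 0"
    and balance: "(\<Sum>j<m. q j) = (\<Sum>i<n. r i)"
    and pref: "\<forall>i<n. bij_betw (\<pi> i) {..<m} {..<m}"
    and speed_nonneg: "\<forall>i<n. \<forall>t\<in>{0..1}. \<eta> i t \<ge> 0"
    and speed_int: "\<forall>i<n. (\<eta> i has_integral r i) {0..1}"
    and outcome: "SG_outcome n m q \<eta> \<pi> aPi"
  shows "pareto_optimal n m q r \<pi> aPi"
proof -
  obtain x where traj: "SG_trajectory n m q \<eta> \<pi> x" and aPi: "\<forall>i<n. \<forall>j<m. aPi i j = x i j 1"
    using outcome unfolding SG_outcome_def by blast
  define f where "f i j s = \<eta> i s * (if receiving n m q x (\<pi> i) j s then 1 else (0::real))" for i j s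
  define E where "E j s = exhausted n q x j s" for j s
  have F1: "(f i j has_integral x i j t) {0..t}" if "i<n" "j<m" "t\<in>{0..1}" for i j t
    using traj that unfolding SG_trajectory_def f_def by blast
  have F2: "f i j s \<ge> 0" if "i<n" "s\<in>{0..1}" for i j s
    using speed_nonneg that unfolding f_def by auto
  have F3: "x i j s \<le> x i j t" if "i<n" "j<m" "0\<le>s" "s\<le>t" "t\<le>1" for i j s t
    by (rule has_integral_subset_le[OF _ F1 F1]) (use that F2 in auto)
  have F3': "E j t" if "E j s" "j<m" "0\<le>s" "s\<le>t" "t\<le>1" for j s t
  proof -
    have "(\<Sum>i<n. x i j s) \<le> (\<Sum>i<n. x i j t)" by (rule sum_mono) (use F3 that in auto)
    then show ?thesis using that unfolding E_def exhausted_def by linarith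
  qed
  have F4: "x i j 0 = 0" if "i<n" "j<m" for i j
    using F1[OF that, of 0] by (simp add: has_integral_iff)
  have Fnn: "x i j t \<ge> 0" if "i<n" "j<m" "t\<in>{0..1}" for i j t
    using F3[OF that(1,2), of 0 t] F4[OF that(1,2)] that by auto
  have F5: "x i j 1 = x i j \<tau>" if "E j \<tau>" "\<tau>\<in>{0..1}" "i<n" "j<m" for i j \<tau>
  proof -
    have "(f i j has_integral 0) {\<tau>..1}"
    proof (rule has_integral_eq[of _ "\<lambda>_. 0"])
      fix s assume s: "s \<in> {\<tau>..1}"
      have "E j s" using F3'[OF that(1) that(4)] s that(2) by auto
      then have "\<not> receiving n m q x (\<pi> i) j s" unfolding receiving_def E_def[symmetric] by auto
      then show "0 = f i j s" unfolding f_def by simp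
    qed simp
    from has_integral_combine[OF _ _ F1[OF that(3,4) that(2)] this] that(2)
    have "(f i j has_integral x i j \<tau> + 0) {0..1}" by auto
    with F1[OF that(3,4), of 1] show ?thesis by (auto dest: has_integral_unique)
  qed
  have F6: "(\<Sum>i<n. x i j 1) \<le> q j" if "j<m" for j
  proof (rule ccontr)
    assume c: "\<not> ?thesis"
    have cont: "continuous_on {0..1} (\<lambda>t. \<Sum>i<n. x i j t)"
    proof (rule continuous_on_sum)
      fix i assume i: "i \<in> {..<n}"
      have int: "f i j integrable_on {0..1}" using F1[of i j 1] i that by auto
      show "continuous_on {0..1} (\<lambda>t. x i j t)"
        using indefinite_integral_continuous_1[OF int]
        by (rule continuous_on_eq) (use F1 i that in \<open>auto intro: integral_unique[symmetric]\<close>)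
    qed
    have "(\<Sum>i<n. x i j 0) \<le> q j" using F4 that q_pos by (simp add: less_imp_le)
    then obtain \<tau> where tau: "0 \<le> \<tau>" "\<tau> \<le> 1" "(\<Sum>i<n. x i j \<tau>) = q j"
      using IVT'[of "\<lambda>t. \<Sum>i<n. x i j t" 0 "q j" 1, OF _ _ _ cont] c by auto
    then have "E j \<tau>" unfolding E_def exhausted_def by simp
    then have "(\<Sum>i<n. x i j 1) = (\<Sum>i<n. x i j \<tau>)" using F5 tau that by auto
    then show False using c tau by simp
  qed
  have onerec: "(\<Sum>j<m. (if receiving n m q x (\<pi> i) j s then 1 else (0::real))) = 1"
    if "i<n" "j0<m" "\<not> E j0 s" for i j0 s
  proof -
    have bij: "bij_betw (\<pi> i) {..<m} {..<m}" using pref that by auto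
    have "j0 \<in> \<pi> i ` {..<m}" using bij that by (simp add: bij_betw_def)
    then obtain l1 where l1: "l1 < m" "\<pi> i l1 = j0" by auto
    define l0 where "l0 = (LEAST l. l<m \<and> \<not> E (\<pi> i l) s)"
    have l0: "l0 < m" "\<not> E (\<pi> i l0) s" using LeastI[of "\<lambda>l. l<m \<and> \<not> E (\<pi> i l) s" l1] l1 that
      unfolding l0_def by auto
    have l0min: "E (\<pi> i l') s" if "l' < l0" for l'
      using not_less_Least[of l' "\<lambda>l. l<m \<and> \<not> E (\<pi> i l) s"] that l0 unfolding l0_def by auto
    have iff: "receiving n m q x (\<pi> i) j s \<longleftrightarrow> j = \<pi> i l0" for j
    proof
      assume "receiving n m q x (\<pi> i) j s"
      then obtain l where l: "l<m" "\<pi> i l = j" "\<not> E j s" "\<forall>l'<l. E (\<pi> i l') s"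
        unfolding receiving_def E_def[symmetric] by auto
      have "\<not> l < l0" using l l0min by auto
      moreover have "\<not> l0 < l" using l l0 by auto
      ultimately show "j = \<pi> i l0" using l by auto
    next
      assume "j = \<pi> i l0"
      then show "receiving n m q x (\<pi> i) j s" unfolding receiving_def E_def[symmetric] using l0 l0min by auto
    qed
    have "\<pi> i l0 < m" using bij l0 by (auto simp: bij_betw_def)
    then show ?thesis by (simp add: iff)
  qed
  have F7: "E j 1" if "j<m" for j
  proof (rule ccontr)
    assume nE: "\<not> E j 1"
    have nEs: "\<not> E j s" if "s\<in>{0..1}" for s using F3'[of j s 1] nE that \<open>j<m\<close> by auto
    have rowsum: "(\<Sum>j'<m. x i j' 1) = r i" if i: "i<n" for i
    proof -
      have int1: "((\<lambda>s. \<Sum>j'<m. f i j' s) has_integral (\<Sum>j'<m. x i j' 1)) {0..1}"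
        by (rule has_integral_sum) (use F1 i in auto)
      have eqs: "(\<Sum>j'<m. f i j' s) = \<eta> i s" if "s \<in> {0..1}" for s
        using onerec[OF i \<open>j<m\<close> nEs[OF that]] unfolding f_def by (simp add: sum_distrib_left[symmetric])
      have "(\<eta> i has_integral (\<Sum>j'<m. x i j' 1)) {0..1}"
        by (rule has_integral_eq[OF eqs int1])
      then show ?thesis using speed_int i by (auto dest: has_integral_unique)
    qed
    have "(\<Sum>i<n. r i) = (\<Sum>i<n. \<Sum>j'<m. x i j' 1)" using rowsum by simp
    also have "\<dots> = (\<Sum>j'<m. \<Sum>i<n. x i j' 1)" by (rule sum.swap)
    also have "\<dots> < (\<Sum>j'<m. q j')"
    proof (rule sum_strict_mono_ex1)
      show "\<exists>a\<in>{..<m}. (\<Sum>i<n. x i a 1) < q a"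
        by (intro bexI[of _ j]) (use nE \<open>j<m\<close> in \<open>auto simp: E_def exhausted_def\<close>)
    qed (use F6 in auto)
    finally show False using balance by simp
  qed
  have colsum: "(\<Sum>i<n. aPi i j) = q j" if "j<m" for j
    using F6[OF that] F7[OF that] aPi that unfolding E_def exhausted_def by simp
  define R where "R j' j = (\<exists>s\<in>{0..1}. E j' s \<and> \<not> E j s)" for j' j
  have Rtrans: "R j1 j3" if R12: "R j1 j2" and R23: "R j2 j3" and jm: "j1<m" "j2<m" "j3<m" for j1 j2 j3
  proof -
    obtain s where s: "s\<in>{0..1}" "E j1 s" "\<not> E j2 s" using R12 unfolding R_def by auto
    obtain s' where s': "s'\<in>{0..1}" "E j2 s'" "\<not> E j3 s'" using R23 unfolding R_def by auto
    have "s \<le> s'"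
    proof (rule ccontr)
      assume "\<not> s \<le> s'"
      then have "E j2 s" using F3'[of j2 s' s] s s' jm by auto
      with s show False by simp
    qed
    then have "E j1 s'" using F3'[of j1 s s'] s s' jm by auto
    then show ?thesis using s' unfolding R_def by auto
  qed
  have Rirr: "\<not> R j j" for j unfolding R_def by auto
  define rk where "rk j = card {j'. j'<m \<and> R j' j}" for j
  have rk_less: "rk j' < rk j" if RR: "R j' j" and jj: "j'<m" "j<m" for j' j
    unfolding rk_def
  proof (rule psubset_card_mono)
    have sub: "{j''. j''<m \<and> R j'' j'} \<subseteq> {j'. j'<m \<and> R j' j}"
    proof
      fix z assume "z \<in> {j''. j''<m \<and> R j'' j'}"
      then have "z<m" "R z j'" by auto
      then show "z \<in> {j'. j'<m \<and> R j' j}" using Rtrans[OF _ RR _ jj] by auto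
    qed
    have "j' \<in> {j'. j'<m \<and> R j' j}" "j' \<notin> {j''. j''<m \<and> R j'' j'}" using RR jj Rirr by auto
    with sub show "{j''. j''<m \<and> R j'' j'} \<subset> {j'. j'<m \<and> R j' j}" by blast
  qed simp
  have arec: "\<exists>s\<in>{0..1}. receiving n m q x (\<pi> i) j s" if "i<n" "j<m" "aPi i j > 0" for i j
  proof (rule ccontr)
    assume nr: "\<not> ?thesis"
    have z: "(\<lambda>_. 0) s = f i j s" if "s \<in> {0..1}" for s
      using nr that unfolding f_def by auto
    have "(f i j has_integral 0) {0..1}"
      by (rule has_integral_eq[OF z has_integral_0])
    then have "x i j 1 = 0" using has_integral_unique F1[OF that(1,2), of 1] by auto
    then show False using aPi that by auto
  qed
  show ?thesis unfolding pareto_optimal_def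
  proof
    assume "\<exists>a. is_allocation n m q r a \<and> (\<forall>i<n. weakly_prefers m (\<pi> i) (a i) (aPi i)) \<and>
            (\<exists>i<n. lex_prefers m (\<pi> i) (a i) (aPi i))"
    then obtain a where alloc: "is_allocation n m q r a"
      and wp: "\<forall>i<n. weakly_prefers m (\<pi> i) (a i) (aPi i)"
      and sp: "\<exists>i<n. lex_prefers m (\<pi> i) (a i) (aPi i)" by blast
    have eq: "\<forall>i<n. a i j = aPi i j" if "j<m" for j
      using that
    proof (induction "rk j" arbitrary: j rule: less_induct)
      case less
      have ge: "a i j \<ge> aPi i j" if i: "i<n" for i
      proof (cases "aPi i j > 0")
        case False
        then show ?thesis using alloc i less.prems unfolding is_allocation_def by force
      next
        case True
        obtain s where s: "s\<in>{0..1}" "receiving n m q x (\<pi> i) j s" using arec[OF i less.prems True] by auto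
        then obtain l where l: "l<m" "\<pi> i l = j" "\<not> E j s" "\<forall>l'<l. E (\<pi> i l') s"
          unfolding receiving_def E_def[symmetric] by auto
        have bij: "bij_betw (\<pi> i) {..<m} {..<m}" using pref i by auto
        have above: "a i (\<pi> i l') = aPi i (\<pi> i l')" if "l' < l" for l'
        proof -
          have m': "\<pi> i l' < m" using bij that l by (auto simp: bij_betw_def)
          have "R (\<pi> i l') j" unfolding R_def using s l that by auto
          then show ?thesis using less.hyps[OF rk_less[OF _ m' less.prems] m'] i by auto
        qed
        from wp i have "(\<forall>j<m. a i j = aPi i j) \<or> lex_prefers m (\<pi> i) (a i) (aPi i)"
          unfolding weakly_prefers_def by auto
        then show ?thesis
        proof
          assume "\<forall>j<m. a i j = aPi i j" then show ?thesis using less.prems by auto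
        next
          assume "lex_prefers m (\<pi> i) (a i) (aPi i)"
          then obtain k where k: "k<m" "\<forall>l<k. a i (\<pi> i l) = aPi i (\<pi> i l)" "a i (\<pi> i k) > aPi i (\<pi> i k)"
            unfolding lex_prefers_def by auto
          consider "k < l" | "k = l" | "l < k" by linarith
          then show ?thesis
          proof cases
            case 1 then show ?thesis using above k by force
          next
            case 2 then show ?thesis using k l by auto
          next
            case 3 then show ?thesis using k l by auto
          qed
        qed
      qed
      have sa: "(\<Sum>i<n. a i j) = q j" using alloc less.prems unfolding is_allocation_def by auto
      show ?case
      proof (intro allI impI)
        fix i assume "i<n"
        show "a i j = aPi i j"
          by (rule sum_mono_inv[of "\<lambda>i. aPi i j" "{..<n}" "\<lambda>i. a i j", symmetric])
             (use sa colsum[OF less.prems] ge \<open>i<n\<close> in auto)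
      qed
    qed
    obtain i k where i: "i<n" "k<m" "a i (\<pi> i k) > aPi i (\<pi> i k)"
      using sp unfolding lex_prefers_def by auto
    have "\<pi> i k < m" using pref i by (auto simp: bij_betw_def)
    then show False using eq i by fastforce
  qed
qed

end
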